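(* Let $m,n\ge 2$. The Hadamard product of two $m$th order $n$-dimensional complete Hankel tensors is a complete Hankel tensor.
   Context: For $w\in\mathbb{R}^n$, $w^m$ is the tensor with entries $w_{i_1}\cdots w_{i_m}$. A Vandermonde vector is $(1,u,u^2,\dots,u^{n-1})^\top$ with $u\in\mathbb{R}$. A real $m$th order $n$-dimensional tensor $\mathcal{A}$ is a complete Hankel tensor if it has a positive Vandermonde decomposition, i.e. $\mathcal{A}=\sum_{k=1}^r\alpha_k(u_k)^m$ with $\alpha_k>0$, $u_k=(1,u_k,\dots,u_k^{n-1})^\top$ Vandermonde vectors, and $u_1,\dots,u_r$ pairwise distinct. The Hadamard product of $\mathcal{A}=(a_{i_1\cdots i_m})$ and $\mathcal{B}=(b_{i_1\cdots i_m})$ is $(a_{i_1\cdots i_m}b_{i_1\cdots i_m})$. *)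

theory Defs
  imports Complex_Main
begin

text \<open>An m-th order n-dimensional real tensor is modelled as a function on index
lists; only index lists of length m with entries in {0..<n} (0-based indices)
are meaningful.\<close>

type_synonym tensor = "nat list \<Rightarrow> real"

definition valid_index :: "nat \<Rightarrow> nat \<Rightarrow> nat list \<Rightarrow> bool" where
  "valid_index m n is \<longleftrightarrow> length is = m \<and> set is \<subseteq> {..<n}"

text \<open>Entry of the rank-one tensor (v)^m where v = (1,u,...,u^(n-1)) is the
Vandermonde vector of u: its (0-based) i-th entry is u^i.\<close>

definition vandermonde :: "real \<Rightarrow> nat \<Rightarrow> real" where
  "vandermonde u i = u ^ i"

definition vandermonde_power :: "real \<Rightarrow> tensor" where
  "vandermonde_power u is = prod_list (map (vandermonde u) is)"

definition complete_Hankel :: "nat \<Rightarrow> nat \<Rightarrow> tensor \<Rightarrow> bool" where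
  "complete_Hankel m n A \<longleftrightarrow>
     (\<exists>(r::nat) (\<alpha>::nat \<Rightarrow> real) (u::nat \<Rightarrow> real).
        r \<ge> 1 \<and> (\<forall>k<r. \<alpha> k > 0) \<and> inj_on u {..<r} \<and>
        (\<forall>is. valid_index m n is \<longrightarrow>
              A is = (\<Sum>k<r. \<alpha> k * vandermonde_power (u k) is)))"

definition hadamard :: "tensor \<Rightarrow> tensor \<Rightarrow> tensor" where
  "hadamard A B = (\<lambda>is. A is * B is)"

end

theory Submission
  imports Defs
begin

lemma vp_mult: "vandermonde_power a is * vandermonde_power b is = vandermonde_power (a*b) is"
  by (induction "is") (simp_all add: vandermonde_power_def vandermonde_def power_mult_distrib)

theorem proposition3:
  fixes m n :: nat and A B :: tensor
  assumes "m \<ge> 2" and "n \<ge> 2"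
    and "complete_Hankel m n A" and "complete_Hankel m n B"
  shows "complete_Hankel m n (hadamard A B)"
proof -
  obtain r1 :: nat and a u :: "nat \<Rightarrow> real" where r1: "r1 \<ge> 1" "\<forall>k<r1. a k > 0"
    and A: "\<forall>is. valid_index m n is \<longrightarrow> A is = (\<Sum>k<r1. a k * vandermonde_power (u k) is)"
    using assms(3) unfolding complete_Hankel_def by (elim exE conjE) (rule that; assumption)
  obtain r2 :: nat and b v :: "nat \<Rightarrow> real" where r2: "r2 \<ge> 1" "\<forall>k<r2. b k > 0"
    and B: "\<forall>is. valid_index m n is \<longrightarrow> B is = (\<Sum>k<r2. b k * vandermonde_power (v k) is)"
    using assms(4) unfolding complete_Hankel_def by (elim exE conjE) (rule that; assumption)
  define I where "I = {..<r1} \<times> {..<r2}"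
  define f where "f = (\<lambda>(k,l). u k * v l)"
  define c where "c = (\<lambda>(k,l). a k * b l)"
  have finI: "finite I" unfolding I_def by simp
  obtain xs where xs: "set xs = f ` I" "distinct xs"
    using finite_distinct_list[OF finite_imageI[OF finI, of f]] by blast
  define \<gamma> where "\<gamma> = (\<lambda>k. \<Sum>p\<in>{p\<in>I. f p = xs!k}. c p)"
  have cpos: "\<And>p. p \<in> I \<Longrightarrow> c p > 0" using r1 r2 unfolding I_def c_def by auto
  have "(0,0) \<in> I" using r1 r2 unfolding I_def by auto
  hence "length xs \<ge> 1" using xs by (cases xs) auto
  moreover have "\<forall>k<length xs. \<gamma> k > 0"
  proof (intro allI impI)
    fix k assume k: "k < length xs"
    then have "xs!k \<in> f ` I" using xs nth_mem by metis
    then obtain p where p: "p \<in> I" "f p = xs!k" by auto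
    show "\<gamma> k > 0" unfolding \<gamma>_def
    proof (rule sum_pos2[of _ p])
      show "finite {p \<in> I. f p = xs ! k}" using finI by simp
      show "p \<in> {p \<in> I. f p = xs ! k}" using p by simp
      show "0 < c p" using cpos p(1) .
      show "\<And>i. i \<in> {p \<in> I. f p = xs ! k} \<Longrightarrow> 0 \<le> c i" using cpos less_imp_le by blast
    qed
  qed
  moreover have "inj_on (\<lambda>k. xs!k) {..<length xs}"
    using xs(2) by (simp add: inj_on_def nth_eq_iff_index_eq)
  moreover have "\<forall>is. valid_index m n is \<longrightarrow>
      hadamard A B is = (\<Sum>k<length xs. \<gamma> k * vandermonde_power (xs!k) is)"
  proof (intro allI impI)
    fix "is" assume vi: "valid_index m n is"
    have "hadamard A B is = (\<Sum>k<r1. \<Sum>l<r2. (a k * vandermonde_power (u k) is) * (b l * vandermonde_power (v l) is))"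
      using A B vi by (simp add: hadamard_def sum_product)
    also have "\<dots> = (\<Sum>p\<in>I. c p * vandermonde_power (f p) is)"
      unfolding I_def sum.cartesian_product c_def f_def
      by (rule sum.cong) (auto simp: vp_mult[symmetric] algebra_simps)
    also have "\<dots> = (\<Sum>s\<in>f ` I. \<Sum>p\<in>{p\<in>I. f p = s}. c p * vandermonde_power (f p) is)"
      by (rule sum.group[OF finI finite_imageI[OF finI], of f, symmetric]) simp
    also have "\<dots> = (\<Sum>s\<in>f ` I. (\<Sum>p\<in>{p\<in>I. f p = s}. c p) * vandermonde_power s is)"
      by (rule sum.cong) (auto simp: sum_distrib_right)
    also have "\<dots> = (\<Sum>k<length xs. \<gamma> k * vandermonde_power (xs!k) is)"
    proof -
      have "f ` I = (\<lambda>k. xs!k) ` {..<length xs}"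
        using xs(1) by (metis atLeast_upt image_set map_nth)
      moreover have "inj_on (\<lambda>k. xs!k) {..<length xs}"
        using xs(2) by (simp add: inj_on_def nth_eq_iff_index_eq)
      ultimately show ?thesis unfolding \<gamma>_def by (simp add: sum.reindex)
    qed
    finally show "hadamard A B is = (\<Sum>k<length xs. \<gamma> k * vandermonde_power (xs!k) is)" .
  qed
  ultimately show ?thesis unfolding complete_Hankel_def by blast
qed

end
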